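(* Let $K\ge 1$ be an integer and $d\in[0,1]$. Let $C_{2K}(d)$ denote the capacity of the $2K$-ary i.i.d. deletion channel with deletion probability $d$ and $C_2(d)$ the capacity of the binary i.i.d. deletion channel with the same deletion probability $d$. Then $$C_{2K}(d)\le C_2(d)+(1-d)\log(K).$$
   Context: The $q$-ary i.i.d. deletion channel with deletion probability $d$: an input sequence $\mathbf X=(x_1,\dots,x_N)\in\{1,\dots,q\}^N$ is transmitted; each symbol is independently (and independently of $\mathbf X$) deleted with probability $d$ or delivered unchanged with probability $1-d$, and the output $\mathbf Y=(y_1,\dots,y_M)$ is the subsequence of surviving symbols in their original order (so $M\sim\mathrm{Binomial}(N,1-d)$); neither transmitter nor receiver knows the positions of deletions. Its capacity is $C_q(d)=\lim_{N\to\infty}\max_{P(\mathbf X)}\frac1N I(\mathbf X;\mathbf Y)$, where the maximum is over all distributions of $\mathbf X$ on $\{1,\dots,q\}^N$. All logarithms are taken to the same base (the unit of information). *)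

theory Defs
  imports "HOL-Analysis.Analysis"
begin

definition del_inputs :: "nat \<Rightarrow> nat \<Rightarrow> nat list set" where
  "del_inputs q N = {xs. length xs = N \<and> set xs \<subseteq> {1..q}}"

definition del_outputs :: "nat \<Rightarrow> nat \<Rightarrow> nat list set" where
  "del_outputs q N = {ys. length ys \<le> N \<and> set ys \<subseteq> {1..q}}"

text \<open>Transition probability P(Y = y | X = x) of the i.i.d. deletion channel:
  the set S of surviving positions is chosen with each position surviving
  independently with probability 1 - d; the output is the subsequence nths x S.\<close>
definition del_trans :: "real \<Rightarrow> nat list \<Rightarrow> nat list \<Rightarrow> real" where
  "del_trans d x y =
     (\<Sum>S\<in>{S. S \<subseteq> {0..<length x} \<and> nths x S = y}.
        (1 - d) ^ card S * d ^ (length x - card S))"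

definition del_input_dists :: "nat \<Rightarrow> nat \<Rightarrow> (nat list \<Rightarrow> real) set" where
  "del_input_dists q N = {P. (\<forall>x. P x \<ge> 0) \<and> (\<forall>x. x \<notin> del_inputs q N \<longrightarrow> P x = 0)
                               \<and> (\<Sum>x\<in>del_inputs q N. P x) = 1}"

definition del_output_prob :: "nat \<Rightarrow> nat \<Rightarrow> real \<Rightarrow> (nat list \<Rightarrow> real) \<Rightarrow> nat list \<Rightarrow> real" where
  "del_output_prob q N d P y = (\<Sum>x\<in>del_inputs q N. P x * del_trans d x y)"

definition del_mutual_info :: "real \<Rightarrow> nat \<Rightarrow> nat \<Rightarrow> real \<Rightarrow> (nat list \<Rightarrow> real) \<Rightarrow> real" where
  "del_mutual_info b q N d P =
     (\<Sum>x\<in>del_inputs q N. \<Sum>y\<in>del_outputs q N.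
        (if P x * del_trans d x y = 0 then 0
         else P x * del_trans d x y * log b (del_trans d x y / del_output_prob q N d P y)))"

text \<open>max over input distributions of I(X;Y) (the supremum is attained).\<close>
definition del_max_info :: "real \<Rightarrow> nat \<Rightarrow> nat \<Rightarrow> real \<Rightarrow> real" where
  "del_max_info b q N d = (SUP P\<in>del_input_dists q N. del_mutual_info b q N d P)"

definition deletion_capacity :: "real \<Rightarrow> nat \<Rightarrow> real \<Rightarrow> real" where
  "deletion_capacity b q d = lim (\<lambda>N. del_max_info b q N d / real N)"

end

theory Submission
  imports Defs "HOL-Real_Asymp.Real_Asymp"
begin


definition wt :: "real \<Rightarrow> nat \<Rightarrow> nat set \<Rightarrow> real" where
  "wt d n S = (1-d)^card S * d^(n - card S)"

lemma del_trans_alt: "del_trans d x y = (\<Sum>S\<in>{S. S \<subseteq> {0..<length x} \<and> nths x S = y}. wt d (length x) S)"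
  by (simp add: del_trans_def wt_def)

lemma fin_subsets: "finite {S. S \<subseteq> {0..<(n::nat)} \<and> P S}"
  by (rule finite_subset[of _ "Pow {0..<n}"]) (auto simp: finite_atLeastLessThan)

lemma wt_nonneg: "0 \<le> d \<Longrightarrow> d \<le> 1 \<Longrightarrow> 0 \<le> wt d n S"
  by (simp add: wt_def)

lemma del_trans_nonneg: "0 \<le> d \<Longrightarrow> d \<le> 1 \<Longrightarrow> 0 \<le> del_trans d x y"
  unfolding del_trans_alt by (rule sum_nonneg) (simp add: wt_nonneg)

lemma del_trans_sum:
  assumes "finite T"
  shows "(\<Sum>y\<in>T. del_trans d x y * g y) =
     (\<Sum>S\<in>{S. S \<subseteq> {0..<length x} \<and> nths x S \<in> T}. wt d (length x) S * g (nths x S))"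
proof -
  let ?A = "{S. S \<subseteq> {0..<length x} \<and> nths x S \<in> T}"
  have "(\<Sum>S\<in>?A. wt d (length x) S * g (nths x S)) =
     (\<Sum>y\<in>T. \<Sum>S\<in>{S\<in>?A. nths x S = y}. wt d (length x) S * g (nths x S))"
    by (rule sum.group[symmetric]) (auto simp: fin_subsets assms)
  also have "\<dots> = (\<Sum>y\<in>T. del_trans d x y * g y)"
    unfolding del_trans_alt sum_distrib_right
    by (rule sum.cong[OF refl], rule sum.cong) auto
  finally show ?thesis by simp
qed

lemma wt_sums:
  "(\<Sum>S\<in>Pow {0..<n}. wt d n S) = 1 \<and> (\<Sum>S\<in>Pow {0..<n}. wt d n S * card S) = n * (1-d)"
proof (induction n)
  case 0
  then show ?case by (simp add: wt_def)
next
  case (Suc n)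
  have cardle: "card S \<le> n" if "S \<in> Pow {0..<n}" for S
    using that card_mono[of "{0..<n}" S] by auto
  have disj: "Pow {0..<n} \<inter> insert n ` Pow {0..<n} = {}" by auto
  have inj: "inj_on (insert n) (Pow {0..<n})"
    by (rule inj_onI) (metis PowD atLeastLessThan_iff insert_ident lessThan_atLeast0 lessThan_iff order_less_irrefl subsetD)
  have P: "Pow {0..<Suc n} = Pow {0..<n} \<union> insert n ` Pow {0..<n}"
    by (simp add: atLeast0_lessThan_Suc Pow_insert)
  have w1: "wt d (Suc n) S = d * wt d n S" if "S \<in> Pow {0..<n}" for S
    using cardle[OF that] by (simp add: wt_def Suc_diff_le)
  have cins: "card (insert n S) = Suc (card S)" if "S \<in> Pow {0..<n}" for S
    using that by (subst card_insert_disjoint) (auto intro: finite_subset)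
  have w2: "wt d (Suc n) (insert n S) = (1-d) * wt d n S" if "S \<in> Pow {0..<n}" for S
    using cardle[OF that] cins[OF that] by (simp add: wt_def)
  have fin: "finite (Pow {0..<n})" by simp
  have A: "(\<Sum>S\<in>Pow {0..<Suc n}. h S) = (\<Sum>S\<in>Pow {0..<n}. h S) + (\<Sum>S\<in>Pow {0..<n}. h (insert n S))" for h :: "nat set \<Rightarrow> real"
    unfolding P by (subst sum.union_disjoint) (auto simp: disj sum.reindex[OF inj])
  have e1: "(\<Sum>S\<in>Pow {0..<n}. wt d (Suc n) S) = d * (\<Sum>S\<in>Pow {0..<n}. wt d n S)"
    unfolding sum_distrib_left by (rule sum.cong) (auto simp: w1)
  have e2: "(\<Sum>S\<in>Pow {0..<n}. wt d (Suc n) (insert n S)) = (1-d) * (\<Sum>S\<in>Pow {0..<n}. wt d n S)"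
    unfolding sum_distrib_left by (rule sum.cong) (auto simp: w2)
  have e3: "(\<Sum>S\<in>Pow {0..<n}. wt d (Suc n) S * card S) = d * (\<Sum>S\<in>Pow {0..<n}. wt d n S * card S)"
    unfolding sum_distrib_left by (rule sum.cong) (auto simp: w1)
  have e4: "(\<Sum>S\<in>Pow {0..<n}. wt d (Suc n) (insert n S) * card (insert n S)) = (1-d) * (\<Sum>S\<in>Pow {0..<n}. wt d n S * card S) + (1-d) * (\<Sum>S\<in>Pow {0..<n}. wt d n S)"
    unfolding sum_distrib_left sum.distrib[symmetric] by (rule sum.cong) (auto simp: w2 cins algebra_simps)
  have s1: "(\<Sum>S\<in>Pow {0..<Suc n}. wt d (Suc n) S) = 1"
    unfolding A e1 e2 using Suc.IH by (simp add: algebra_simps)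
  have "(\<Sum>S\<in>Pow {0..<Suc n}. wt d (Suc n) S * card S)
      = d * (\<Sum>S\<in>Pow {0..<n}. wt d n S * card S) + (1-d) * (\<Sum>S\<in>Pow {0..<n}. wt d n S * card S) + (1-d) * (\<Sum>S\<in>Pow {0..<n}. wt d n S)"
    unfolding A e3 e4 by simp
  also have "\<dots> = Suc n * (1-d)" using Suc.IH by (simp add: algebra_simps)
  finally show ?case using s1 by simp
qed



lemma finite_inputs: "finite (del_inputs q N)"
proof -
  have "del_inputs q N = {xs. set xs \<subseteq> {1..q} \<and> length xs = N}"
    by (auto simp: del_inputs_def)
  then show ?thesis using finite_lists_length_eq[of "{1..q}" N] by simp
qed

lemma card_inputs: "card (del_inputs q N) = q ^ N"
proof -
  have "del_inputs q N = {xs. set xs \<subseteq> {1..q} \<and> length xs = N}"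
    by (auto simp: del_inputs_def)
  then show ?thesis using card_lists_length_eq[of "{1..q}" N] by simp
qed

lemma finite_outputs: "finite (del_outputs q N)"
proof -
  have "del_outputs q N = {xs. set xs \<subseteq> {1..q} \<and> length xs \<le> N}"
    by (auto simp: del_outputs_def)
  then show ?thesis using finite_lists_length_le[of "{1..q}" N] by simp
qed

lemma length_nths_sub: "S \<subseteq> {0..<length x} \<Longrightarrow> length (nths x S) = card S"
  unfolding length_nths by (rule arg_cong[where f=card]) auto

lemma length_nths_le: "length (nths x S) \<le> length x"
proof -
  have "length (nths x S) = card {i. i < length x \<and> i \<in> S}" by (rule length_nths)
  also have "\<dots> \<le> card {0..<length x}" by (rule card_mono) auto
  finally show ?thesis by simp
qed

lemma nths_in_outputs: "x \<in> del_inputs q N \<Longrightarrow> nths x S \<in> del_outputs q N"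
  using length_nths_le[of x S] set_nths_subset[of x S]
  by (auto simp: del_inputs_def del_outputs_def)

lemma del_trans_out: "x \<in> del_inputs q N \<Longrightarrow> y \<notin> del_outputs q N \<Longrightarrow> del_trans d x y = 0"
  unfolding del_trans_alt using nths_in_outputs[of x q N] by (intro sum.neutral) auto

lemma inputs_len: "x \<in> del_inputs q N \<Longrightarrow> length x = N"
  by (simp add: del_inputs_def)

lemma del_trans_sums:
  assumes x: "x \<in> del_inputs q N"
  shows "(\<Sum>y\<in>del_outputs q N. del_trans d x y) = 1"
    and "(\<Sum>y\<in>del_outputs q N. del_trans d x y * length y) = N * (1-d)"
proof -
  have set: "{S. S \<subseteq> {0..<length x} \<and> nths x S \<in> del_outputs q N} = Pow {0..<N}"
    using nths_in_outputs[OF x] inputs_len[OF x] by auto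
  have "(\<Sum>y\<in>del_outputs q N. del_trans d x y * 1) = (\<Sum>S\<in>Pow {0..<N}. wt d N S * 1)"
    using del_trans_sum[OF finite_outputs, of d x "\<lambda>_. 1" q N] set inputs_len[OF x] by simp
  then show "(\<Sum>y\<in>del_outputs q N. del_trans d x y) = 1" using wt_sums[of d N] by simp
  have "(\<Sum>y\<in>del_outputs q N. del_trans d x y * real (length y)) =
      (\<Sum>S\<in>Pow {0..<N}. wt d N S * real (length (nths x S)))"
    using del_trans_sum[OF finite_outputs, of d x "\<lambda>y. real (length y)" q N] set inputs_len[OF x] by simp
  also have "\<dots> = (\<Sum>S\<in>Pow {0..<N}. wt d N S * real (card S))"
    by (rule sum.cong[OF refl]) (use inputs_len[OF x] length_nths_sub in auto)
  finally show "(\<Sum>y\<in>del_outputs q N. del_trans d x y * length y) = N * (1-d)" using wt_sums[of d N] by simp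
qed

lemma del_trans_le1:
  assumes x: "x \<in> del_inputs q N" and d: "0 \<le> d" "d \<le> 1"
  shows "del_trans d x y \<le> 1"
proof (cases "y \<in> del_outputs q N")
  case True
  have "del_trans d x y \<le> (\<Sum>y\<in>del_outputs q N. del_trans d x y)"
    by (rule member_le_sum[OF True]) (auto simp: del_trans_nonneg d finite_outputs)
  then show ?thesis using del_trans_sums(1)[OF x] by simp
next
  case False
  then show ?thesis using del_trans_out[OF x False] by simp
qed

lemma dists_nonneg: "P \<in> del_input_dists q N \<Longrightarrow> 0 \<le> P x"
  by (simp add: del_input_dists_def)
lemma dists_out: "P \<in> del_input_dists q N \<Longrightarrow> x \<notin> del_inputs q N \<Longrightarrow> P x = 0"
  by (simp add: del_input_dists_def)
lemma dists_sum: "P \<in> del_input_dists q N \<Longrightarrow> (\<Sum>x\<in>del_inputs q N. P x) = 1"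
  by (simp add: del_input_dists_def)

lemma outprob_nonneg: "P \<in> del_input_dists q N \<Longrightarrow> 0 \<le> d \<Longrightarrow> d \<le> 1 \<Longrightarrow> 0 \<le> del_output_prob q N d P y"
  unfolding del_output_prob_def by (intro sum_nonneg mult_nonneg_nonneg) (auto simp: dists_nonneg del_trans_nonneg)

lemma outprob_ge: "P \<in> del_input_dists q N \<Longrightarrow> 0 \<le> d \<Longrightarrow> d \<le> 1 \<Longrightarrow> x \<in> del_inputs q N \<Longrightarrow>
   P x * del_trans d x y \<le> del_output_prob q N d P y"
  unfolding del_output_prob_def
  by (rule member_le_sum) (auto simp: finite_inputs dists_nonneg del_trans_nonneg)

lemma outprob_sum: "P \<in> del_input_dists q N \<Longrightarrow> (\<Sum>y\<in>del_outputs q N. del_output_prob q N d P y) = 1"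
  unfolding del_output_prob_def
  apply (subst sum.swap)
  apply (simp add: sum_distrib_left[symmetric] del_trans_sums(1) cong: sum.cong)
  by (simp add: dists_sum)

lemma mi_alt: "del_mutual_info b q N d P = (\<Sum>x\<in>del_inputs q N. \<Sum>y\<in>del_outputs q N.
        P x * del_trans d x y * log b (del_trans d x y / del_output_prob q N d P y))"
  unfolding del_mutual_info_def by (intro sum.cong refl) auto

lemma entropy_bound:
  fixes a :: "'a \<Rightarrow> real"
  assumes A: "finite A" and nn: "\<And>i. i \<in> A \<Longrightarrow> 0 \<le> a i" and b: "b > 1"
  shows "(\<Sum>i\<in>A. a i * log b (sum a A / a i)) \<le> sum a A * log b (card A)"
proof (cases "A = {}")
  case True then show ?thesis by simp
next
  case False
  define n where "n = real (card A)"
  define S where "S = sum a A"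
  have n: "n > 0" using False A by (simp add: n_def card_gt_0_iff)
  have S: "S \<ge> 0" unfolding S_def by (rule sum_nonneg) (use nn in auto)
  have lb: "ln b > 0" using b by simp
  have key: "a i * log b (S / a i) \<le> (S / n - a i) / ln b + a i * log b n" if i: "i \<in> A" for i
  proof (cases "a i = 0")
    case True then show ?thesis using S n lb by simp
  next
    case False
    then have ai: "a i > 0" using nn[OF i] by simp
    have Sp: "S \<ge> a i" unfolding S_def by (rule member_le_sum[OF i]) (use nn A in auto)
    then have Sp': "S > 0" using ai by simp
    have "a i * log b (S / a i) = a i * (ln (S / (n * a i)) / ln b) + a i * log b n"
      using ai Sp' n lb by (simp add: log_def ln_div ln_mult field_simps)
    also have "ln (S / (n * a i)) \<le> S / (n * a i) - 1"
      by (rule ln_le_minus_one) (use ai Sp' n in simp)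
    then have "a i * (ln (S / (n * a i)) / ln b) \<le> a i * ((S / (n * a i) - 1) / ln b)"
      using ai lb by (intro mult_left_mono divide_right_mono) auto
    also have "a i * ((S / (n * a i) - 1) / ln b) = (S / n - a i) / ln b"
      using ai n lb by (simp add: field_simps)
    finally show ?thesis by simp
  qed
  have "(\<Sum>i\<in>A. a i * log b (S / a i)) \<le> (\<Sum>i\<in>A. (S / n - a i) / ln b + a i * log b n)"
    by (rule sum_mono) (rule key)
  also have "\<dots> = (n * (S / n) - S) / ln b + S * log b n"
    by (simp add: sum.distrib sum_divide_distrib[symmetric] sum_subtractf S_def n_def sum_distrib_right[symmetric])
  also have "\<dots> = S * log b n" using n by simp
  finally show ?thesis by (simp add: S_def n_def)
qed



lemma mi_upper:
  assumes P: "P \<in> del_input_dists q N" and d: "0 \<le> d" "d \<le> 1" and b: "b > 1" and q: "q \<ge> 1"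
  shows "del_mutual_info b q N d P \<le> N * log b q"
proof -
  let ?W = "del_trans d" and ?Q = "del_output_prob q N d P"
  have tm: "P x * ?W x y * log b (?W x y / ?Q y) \<le> P x * ?W x y * log b (1 / P x)"
    if xin: "x \<in> del_inputs q N" for x y
  proof (cases "P x * ?W x y = 0")
    case True then show ?thesis by (simp only: True)
  next
    case False
    have Pp: "P x > 0" using False dists_nonneg[OF P, of x] by (cases "P x = 0") auto
    have Wp: "?W x y > 0" using False del_trans_nonneg[OF d, of x y] by (cases "?W x y = 0") auto
    have Qge: "P x * ?W x y \<le> ?Q y" by (rule outprob_ge[OF P d xin])
    have Qp: "?Q y > 0" using Qge Pp Wp by (smt (verit) mult_pos_pos)
    have "?W x y / ?Q y \<le> ?W x y / (P x * ?W x y)"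
      by (rule divide_left_mono) (use Qge Pp Wp Qp in auto)
    also have "\<dots> = 1 / P x" using Wp by simp
    finally have "log b (?W x y / ?Q y) \<le> log b (1 / P x)"
      using b Wp Qp Pp by (subst log_le_cancel_iff) auto
    then show ?thesis using Pp Wp by (intro mult_left_mono) auto
  qed
  have "del_mutual_info b q N d P \<le> (\<Sum>x\<in>del_inputs q N. \<Sum>y\<in>del_outputs q N. P x * ?W x y * log b (1 / P x))"
    unfolding mi_alt by (intro sum_mono) (rule tm)
  also have "\<dots> = (\<Sum>x\<in>del_inputs q N. P x * log b (1 / P x) * (\<Sum>y\<in>del_outputs q N. ?W x y))"
    by (intro sum.cong refl) (simp add: sum_distrib_left mult_ac)
  also have "\<dots> = (\<Sum>x\<in>del_inputs q N. P x * log b (sum P (del_inputs q N) / P x))"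
    by (intro sum.cong refl) (simp add: del_trans_sums(1) dists_sum[OF P])
  also have "\<dots> \<le> sum P (del_inputs q N) * log b (card (del_inputs q N))"
    by (rule entropy_bound[OF finite_inputs _ b]) (rule dists_nonneg[OF P])
  also have "\<dots> = N * log b q"
    using q b by (simp add: dists_sum[OF P] card_inputs log_nat_power)
  finally show ?thesis .
qed

definition pm :: "nat \<Rightarrow> nat list \<Rightarrow> real" where
  "pm N x = (if x = replicate N 1 then 1 else 0)"

lemma rep_in: "q \<ge> 1 \<Longrightarrow> replicate N 1 \<in> del_inputs q N"
  by (auto simp: del_inputs_def)

lemma pm_dist: assumes "q \<ge> 1" shows "pm N \<in> del_input_dists q N"
proof -
  have "(\<Sum>x\<in>del_inputs q N. pm N x) = 1"
    unfolding pm_def using sum.delta[OF finite_inputs, of "replicate N 1" "\<lambda>_. (1::real)" q N] rep_in[OF assms]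
    by simp
  then show ?thesis unfolding del_input_dists_def using assms by (auto simp: pm_def del_inputs_def)
qed

lemma pm_mi: "del_mutual_info b q N d (pm N) = 0"
proof -
  have Q: "del_output_prob q N d (pm N) y = (if replicate N 1 \<in> del_inputs q N then del_trans d (replicate N 1) y else 0)" for y
  proof -
    have "del_output_prob q N d (pm N) y = (\<Sum>x\<in>del_inputs q N. if x = replicate N 1 then del_trans d x y else 0)"
      unfolding del_output_prob_def pm_def by (intro sum.cong refl) auto
    then show ?thesis using sum.delta[OF finite_inputs, of "replicate N 1" "\<lambda>x. del_trans d x y" q N] by simp
  qed
  show ?thesis
    unfolding mi_alt
    by (intro sum.neutral ballI) (auto simp: pm_def Q)
qed

lemma dists_ne: "q \<ge> 1 \<Longrightarrow> del_input_dists q N \<noteq> {}"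
  using pm_dist by blast

lemma mi_bdd:
  assumes "0 \<le> d" "d \<le> 1" "b > 1" "q \<ge> 1"
  shows "bdd_above ((\<lambda>P. del_mutual_info b q N d P) ` del_input_dists q N)"
  using mi_upper[OF _ assms] by (intro bdd_aboveI2) auto

lemma mi_le_max:
  assumes "0 \<le> d" "d \<le> 1" "b > 1" "q \<ge> 1" "P \<in> del_input_dists q N"
  shows "del_mutual_info b q N d P \<le> del_max_info b q N d"
  unfolding del_max_info_def by (rule cSUP_upper[OF assms(5) mi_bdd[OF assms(1-4)]])

lemma max_le:
  assumes "q \<ge> 1" "\<And>P. P \<in> del_input_dists q N \<Longrightarrow> del_mutual_info b q N d P \<le> M"
  shows "del_max_info b q N d \<le> M"
  unfolding del_max_info_def by (rule cSUP_least[OF dists_ne[OF assms(1)] assms(2)])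

lemma max_nonneg:
  assumes "0 \<le> d" "d \<le> 1" "b > 1" "q \<ge> 1"
  shows "0 \<le> del_max_info b q N d"
  using mi_le_max[OF assms pm_dist[OF assms(4)]] pm_mi by simp

lemma max_upper:
  assumes "0 \<le> d" "d \<le> 1" "b > 1" "q \<ge> 1"
  shows "del_max_info b q N d \<le> N * log b q"
  by (rule max_le[OF assms(4)]) (rule mi_upper[OF _ assms])



lemma regroup:
  assumes "finite A" "finite B" "f ` A \<subseteq> B"
  shows "(\<Sum>a\<in>A. h a (f a)) = (\<Sum>b\<in>B. \<Sum>a\<in>{a\<in>A. f a = b}. h a b)"
proof -
  have "(\<Sum>a\<in>A. h a (f a)) = (\<Sum>b\<in>B. \<Sum>a\<in>{a\<in>A. f a = b}. h a (f a))"
    by (rule sum.group[symmetric]) (use assms in auto)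
  also have "\<dots> = (\<Sum>b\<in>B. \<Sum>a\<in>{a\<in>A. f a = b}. h a b)"
    by (intro sum.cong refl) auto
  finally show ?thesis .
qed

definition phi :: "nat \<Rightarrow> nat \<Rightarrow> nat" where "phi K s = (if s \<le> K then 1 else 2)"
definition psi :: "nat \<Rightarrow> nat \<Rightarrow> nat" where "psi K s = (if s \<le> K then s else s - K)"

definition pre :: "nat \<Rightarrow> nat \<Rightarrow> nat list \<Rightarrow> nat list set" where
  "pre K N y' = {y \<in> del_outputs (2*K) N. map (phi K) y = y'}"

lemma phi_in: "set (map (phi K) x) \<subseteq> {1..2}"
  by (auto simp: phi_def)

lemma map_phi_inputs: "x \<in> del_inputs (2*K) N \<Longrightarrow> map (phi K) x \<in> del_inputs 2 N"
  using phi_in[of K x] by (auto simp: del_inputs_def)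

lemma map_phi_outputs: "y \<in> del_outputs (2*K) N \<Longrightarrow> map (phi K) y \<in> del_outputs 2 N"
  using phi_in[of K y] by (auto simp: del_outputs_def)

lemma finite_pre: "finite (pre K N y')"
  unfolding pre_def using finite_outputs by auto

lemma del_trans_map:
  assumes x: "x \<in> del_inputs (2*K) N"
  shows "del_trans d (map (phi K) x) y' = (\<Sum>y\<in>pre K N y'. del_trans d x y)"
proof -
  have "(\<Sum>y\<in>pre K N y'. del_trans d x y * 1) =
     (\<Sum>S\<in>{S. S \<subseteq> {0..<length x} \<and> nths x S \<in> pre K N y'}. wt d (length x) S * 1)"
    by (rule del_trans_sum[OF finite_pre])
  also have "{S. S \<subseteq> {0..<length x} \<and> nths x S \<in> pre K N y'} =
      {S. S \<subseteq> {0..<length (map (phi K) x)} \<and> nths (map (phi K) x) S = y'}"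
    using nths_in_outputs[OF x] by (auto simp: pre_def nths_map)
  finally show ?thesis by (simp add: del_trans_alt)
qed

lemma del_trans_le_map:
  assumes x: "x \<in> del_inputs (2*K) N" and y: "y \<in> del_outputs (2*K) N" and d: "0 \<le> d" "d \<le> 1"
  shows "del_trans d x y \<le> del_trans d (map (phi K) x) (map (phi K) y)"
  unfolding del_trans_map[OF x]
  by (rule member_le_sum) (auto simp: pre_def y finite_pre[unfolded pre_def] del_trans_nonneg d)

lemma card_pre: "card (pre K N y') \<le> K ^ length y'"
proof -
  let ?B = "{z. set z \<subseteq> {1..K} \<and> length z = length y'}"
  have inj: "inj_on (map (psi K)) (pre K N y')"
  proof (rule inj_onI)
    fix u v assume u: "u \<in> pre K N y'" and v: "v \<in> pre K N y'" and e: "map (psi K) u = map (psi K) v"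
    have m1: "map (phi K) u = map (phi K) v" using u v by (simp add: pre_def)
    have L: "length u = length v" using e by (metis length_map)
    have "map (\<lambda>s. (phi K s, psi K s)) u = map (\<lambda>s. (phi K s, psi K s)) v"
    proof (rule nth_equalityI)
      show "length (map (\<lambda>s. (phi K s, psi K s)) u) = length (map (\<lambda>s. (phi K s, psi K s)) v)" using L by simp
      fix i assume "i < length (map (\<lambda>s. (phi K s, psi K s)) u)"
      then have i: "i < length u" "i < length v" using L by auto
      have "phi K (u!i) = phi K (v!i)" using arg_cong[OF m1, of "\<lambda>l. l!i"] i by simp
      moreover have "psi K (u!i) = psi K (v!i)" using arg_cong[OF e, of "\<lambda>l. l!i"] i by simp
      ultimately show "map (\<lambda>s. (phi K s, psi K s)) u ! i = map (\<lambda>s. (phi K s, psi K s)) v ! i" using i by simp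
    qed
    moreover have "inj_on (\<lambda>s. (phi K s, psi K s)) (set u \<union> set v)"
      using u v by (auto simp: inj_on_def pre_def del_outputs_def phi_def psi_def split: if_splits)
    ultimately show "u = v" using inj_on_map_eq_map by blast
  qed
  have "map (psi K) ` pre K N y' \<subseteq> ?B"
    by (force simp: pre_def del_outputs_def psi_def subset_iff)
  then have "card (pre K N y') \<le> card ?B"
    using card_inj_on_le[OF inj] finite_lists_length_eq[of "{1..K}"] by blast
  also have "\<dots> = K ^ length y'" using card_lists_length_eq[of "{1..K}"] by simp
  finally show ?thesis .
qed



definition Pmap :: "nat \<Rightarrow> nat \<Rightarrow> (nat list \<Rightarrow> real) \<Rightarrow> nat list \<Rightarrow> real" where
  "Pmap K N P x' = (\<Sum>x\<in>{x\<in>del_inputs (2*K) N. map (phi K) x = x'}. P x)"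

lemma Pmap_dist:
  assumes P: "P \<in> del_input_dists (2*K) N"
  shows "Pmap K N P \<in> del_input_dists 2 N"
proof -
  have nn: "0 \<le> Pmap K N P x'" for x'
    unfolding Pmap_def by (rule sum_nonneg) (simp add: dists_nonneg[OF P])
  have out: "Pmap K N P x' = 0" if "x' \<notin> del_inputs 2 N" for x'
    unfolding Pmap_def using that map_phi_inputs[of _ K N] by (intro sum.neutral) auto
  have "(\<Sum>x'\<in>del_inputs 2 N. Pmap K N P x') = (\<Sum>x\<in>del_inputs (2*K) N. P x)"
    unfolding Pmap_def
    by (rule regroup[where h="\<lambda>a b. P a", symmetric]) (auto simp: finite_inputs map_phi_inputs)
  then show ?thesis using nn out dists_sum[OF P] by (simp add: del_input_dists_def)
qed

theorem mi_map_bound: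
  assumes P: "P \<in> del_input_dists (2*K) N" and d: "0 \<le> d" "d \<le> 1" and b: "b > 1" and K: "K \<ge> 1"
  shows "del_mutual_info b (2*K) N d P \<le> del_mutual_info b 2 N d (Pmap K N P) + N * (1-d) * log b K"
proof -
  define X where "X = del_inputs (2*K) N"
  define Y where "Y = del_outputs (2*K) N"
  define X2 where "X2 = del_inputs 2 N"
  define Y2 where "Y2 = del_outputs 2 N"
  define W where "W = del_trans d"
  define Q where "Q = del_output_prob (2*K) N d P"
  define P' where "P' = Pmap K N P"
  define Q2 where "Q2 = del_output_prob 2 N d P'"
  define f where "f = map (phi K)"
  have P': "P' \<in> del_input_dists 2 N" unfolding P'_def by (rule Pmap_dist[OF P])
  have fX: "finite X" "finite X2" "finite Y" "finite Y2"
    by (simp_all add: X_def X2_def Y_def Y2_def finite_inputs finite_outputs)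
  have fXim: "f ` X \<subseteq> X2" and fYim: "f ` Y \<subseteq> Y2"
    by (auto simp: f_def X_def X2_def Y_def Y2_def map_phi_inputs map_phi_outputs)
  have preY: "pre K N y' = {y\<in>Y. f y = y'}" for y'
    by (simp add: pre_def Y_def f_def)
  have Wmap: "W (f x) y' = (\<Sum>y\<in>{y\<in>Y. f y = y'}. W x y)" if "x \<in> X" for x y'
    using del_trans_map[of x K N d y'] that by (simp add: W_def f_def X_def preY)
  have Wnn: "0 \<le> W x y" for x y by (simp add: W_def del_trans_nonneg d)
  have Pnn: "0 \<le> P x" for x by (rule dists_nonneg[OF P])
  have Qnn: "0 \<le> Q y" for y unfolding Q_def by (rule outprob_nonneg[OF P d])
  have Qdef: "Q y = (\<Sum>x\<in>X. P x * W x y)" for y by (simp add: Q_def del_output_prob_def X_def W_def)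
  have P'def: "P' x' = (\<Sum>x\<in>{x\<in>X. f x = x'}. P x)" for x' by (simp add: P'_def Pmap_def X_def f_def)
  have Q2: "Q2 y' = (\<Sum>y\<in>{y\<in>Y. f y = y'}. Q y)" for y'
  proof -
    have "Q2 y' = (\<Sum>x'\<in>X2. P' x' * W x' y')" by (simp add: Q2_def del_output_prob_def X2_def W_def)
    also have "\<dots> = (\<Sum>x'\<in>X2. \<Sum>x\<in>{x\<in>X. f x = x'}. P x * W x' y')"
      by (simp add: P'def sum_distrib_right)
    also have "\<dots> = (\<Sum>x\<in>X. P x * W (f x) y')"
      by (rule regroup[where h="\<lambda>a b. P a * W b y'", symmetric, OF fX(1) fX(2) fXim])
    also have "\<dots> = (\<Sum>x\<in>X. \<Sum>y\<in>{y\<in>Y. f y = y'}. P x * W x y)"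
      by (intro sum.cong refl) (simp add: Wmap sum_distrib_left)
    also have "\<dots> = (\<Sum>y\<in>{y\<in>Y. f y = y'}. Q y)"
      by (subst sum.swap) (simp add: Qdef)
    finally show ?thesis .
  qed
  define h where "h x' y' = log b (W x' y' / Q2 y')" for x' y'
  define g where "g y = log b (Q2 (f y) / Q y)" for y
  have split: "P x * W x y * log b (W x y / Q y) =
      P x * W x y * h (f x) (f y) + P x * W x y * log b (W x y / W (f x) (f y)) + P x * W x y * g y"
    if x: "x \<in> X" and y: "y \<in> Y" for x y
  proof (cases "P x * W x y = 0")
    case True then show ?thesis by (simp only: True)
  next
    case False
    have Pp: "P x > 0" using False Pnn[of x] by (cases "P x = 0") auto
    have Wp: "W x y > 0" using False Wnn[of x y] by (cases "W x y = 0") auto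
    have W'ge: "W x y \<le> W (f x) (f y)"
      using del_trans_le_map[of x K N y d] x y d by (simp add: W_def f_def X_def Y_def)
    have Qge: "P x * W x y \<le> Q y" using outprob_ge[OF P d, of x y] x by (simp add: Q_def W_def X_def)
    have Qp: "Q y > 0" using Qge Pp Wp by (smt (verit) mult_pos_pos)
    have Q2ge: "Q y \<le> Q2 (f y)" unfolding Q2
      by (rule member_le_sum) (use y fX Qnn in auto)
    have l: "log b (W x y / Q y) = h (f x) (f y) + log b (W x y / W (f x) (f y)) + g y"
      using Wp Qp W'ge Q2ge b by (simp add: h_def g_def log_divide)
    show ?thesis unfolding l by (simp add: algebra_simps)
  qed
  have I: "del_mutual_info b (2*K) N d P =
      (\<Sum>x\<in>X. \<Sum>y\<in>Y. P x * W x y * h (f x) (f y)) + (\<Sum>x\<in>X. \<Sum>y\<in>Y. P x * W x y * log b (W x y / W (f x) (f y)))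
      + (\<Sum>x\<in>X. \<Sum>y\<in>Y. P x * W x y * g y)"
    unfolding mi_alt X_def[symmetric] Y_def[symmetric] W_def[symmetric] Q_def[symmetric]
    by (simp add: split sum.distrib cong: sum.cong)
  have A1: "(\<Sum>x\<in>X. \<Sum>y\<in>Y. P x * W x y * h (f x) (f y)) = del_mutual_info b 2 N d P'"
  proof -
    have "(\<Sum>x\<in>X. \<Sum>y\<in>Y. P x * W x y * h (f x) (f y)) = (\<Sum>x\<in>X. P x * (\<Sum>y'\<in>Y2. \<Sum>y\<in>{y\<in>Y. f y = y'}. W x y * h (f x) y'))"
      by (intro sum.cong refl)
         (simp add: sum_distrib_left[symmetric] mult.assoc regroup[where h="\<lambda>a b. W x a * h (f x) b" for x, OF fX(3) fX(4) fYim])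
    also have "\<dots> = (\<Sum>x\<in>X. P x * (\<Sum>y'\<in>Y2. W (f x) y' * h (f x) y'))"
      by (intro sum.cong refl) (simp add: Wmap sum_distrib_right)
    also have "\<dots> = (\<Sum>x'\<in>X2. \<Sum>x\<in>{x\<in>X. f x = x'}. P x * (\<Sum>y'\<in>Y2. W x' y' * h x' y'))"
      by (rule regroup[where h="\<lambda>a b. P a * (\<Sum>y'\<in>Y2. W b y' * h b y')", OF fX(1) fX(2) fXim])
    also have "\<dots> = (\<Sum>x'\<in>X2. \<Sum>y'\<in>Y2. P' x' * W x' y' * h x' y')"
      by (rule sum.cong[OF refl]) (simp add: P'def sum_distrib_left[symmetric] sum_distrib_right[symmetric] mult.assoc)
    also have "\<dots> = del_mutual_info b 2 N d P'"
      by (simp add: mi_alt X2_def Y2_def W_def h_def Q2_def)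
    finally show ?thesis .
  qed
  have A2: "(\<Sum>x\<in>X. \<Sum>y\<in>Y. P x * W x y * log b (W x y / W (f x) (f y))) \<le> 0"
  proof (intro sum_nonpos)
    fix x y assume x: "x \<in> X" and y: "y \<in> Y"
    show "P x * W x y * log b (W x y / W (f x) (f y)) \<le> 0"
    proof (cases "W x y = 0")
      case True then show ?thesis by simp
    next
      case False
      then have Wp: "W x y > 0" using Wnn[of x y] by simp
      have W'ge: "W x y \<le> W (f x) (f y)"
        using del_trans_le_map[of x K N y d] x y d by (simp add: W_def f_def X_def Y_def)
      have "log b (W x y / W (f x) (f y)) \<le> 0"
        using Wp W'ge b by (simp add: log_divide)
      then show ?thesis using Pnn[of x] Wnn[of x y] by (simp add: mult_nonneg_nonpos)
    qed
  qed
  have lenY2: "(\<Sum>y'\<in>Y2. Q2 y' * length y') = N * (1-d)"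
  proof -
    have "(\<Sum>y'\<in>Y2. Q2 y' * length y') = (\<Sum>x'\<in>X2. P' x' * (\<Sum>y'\<in>Y2. W x' y' * length y'))"
      unfolding Q2_def del_output_prob_def X2_def[symmetric] W_def[symmetric]
      by (simp add: sum_distrib_left sum_distrib_right mult.assoc) (rule sum.swap)
    also have "\<dots> = (\<Sum>x'\<in>X2. P' x' * (N * (1-d)))"
      by (intro sum.cong refl) (simp add: W_def Y2_def X2_def del_trans_sums(2))
    also have "\<dots> = N * (1-d)" using dists_sum[OF P'] by (simp add: sum_distrib_right[symmetric] X2_def)
    finally show ?thesis .
  qed
  have logK: "log b K \<ge> 0" using K b by simp
  have A3: "(\<Sum>x\<in>X. \<Sum>y\<in>Y. P x * W x y * g y) \<le> N * (1-d) * log b K"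
  proof -
    have "(\<Sum>x\<in>X. \<Sum>y\<in>Y. P x * W x y * g y) = (\<Sum>y\<in>Y. Q y * g y)"
      by (subst sum.swap) (simp add: Qdef sum_distrib_right)
    also have "\<dots> = (\<Sum>y'\<in>Y2. \<Sum>y\<in>{y\<in>Y. f y = y'}. Q y * log b (Q2 y' / Q y))"
      unfolding g_def by (rule regroup[where h="\<lambda>a c. Q a * log b (Q2 c / Q a)", OF fX(3) fX(4) fYim])
    also have "\<dots> \<le> (\<Sum>y'\<in>Y2. Q2 y' * (length y' * log b K))"
    proof (rule sum_mono)
      fix y' assume "y' \<in> Y2"
      have fin: "finite {y\<in>Y. f y = y'}" using fX by simp
      have "(\<Sum>y\<in>{y\<in>Y. f y = y'}. Q y * log b (Q2 y' / Q y)) \<le> Q2 y' * log b (card {y\<in>Y. f y = y'})"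
        using entropy_bound[OF fin, of Q b] Qnn b by (simp add: Q2[symmetric])
      also have "\<dots> \<le> Q2 y' * (length y' * log b K)"
      proof (rule mult_left_mono)
        show "0 \<le> Q2 y'" unfolding Q2 by (rule sum_nonneg) (simp add: Qnn)
        have c: "card {y\<in>Y. f y = y'} \<le> K ^ length y'" using card_pre[of K N y'] by (simp add: preY)
        show "log b (card {y\<in>Y. f y = y'}) \<le> length y' * log b K"
        proof (cases "card {y\<in>Y. f y = y'} = 0")
          case True then show ?thesis using logK by (simp add: log_def[of b 0])
        next
          case False
          have "log b (card {y\<in>Y. f y = y'}) \<le> log b (real K ^ length y')"
            using False c b K by (subst log_le_cancel_iff) (auto simp flip: of_nat_power)
          also have "\<dots> = length y' * log b K" using K b by (simp add: log_nat_power)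
          finally show ?thesis .
        qed
      qed
      finally show "(\<Sum>y\<in>{y\<in>Y. f y = y'}. Q y * log b (Q2 y' / Q y)) \<le> Q2 y' * (length y' * log b K)" .
    qed
    also have "\<dots> = (\<Sum>y'\<in>Y2. Q2 y' * length y') * log b K"
      by (simp add: sum_distrib_right mult.assoc)
    also have "\<dots> = N * (1-d) * log b K" by (simp add: lenY2)
    finally show ?thesis .
  qed
  show ?thesis using I A1 A2 A3 by (simp add: P'_def)
qed



corollary max_map_bound:
  assumes d: "0 \<le> d" "d \<le> 1" and b: "b > 1" and K: "K \<ge> 1"
  shows "del_max_info b (2*K) N d \<le> del_max_info b 2 N d + N * (1-d) * log b K"
proof (rule max_le)
  show "1 \<le> 2*K" using K by simp
  fix P assume P: "P \<in> del_input_dists (2 * K) N"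
  have "del_mutual_info b (2*K) N d P \<le> del_mutual_info b 2 N d (Pmap K N P) + N * (1-d) * log b K"
    by (rule mi_map_bound[OF P d b K])
  also have "del_mutual_info b 2 N d (Pmap K N P) \<le> del_max_info b 2 N d"
    by (rule mi_le_max[OF d b _ Pmap_dist[OF P]]) simp
  finally show "del_mutual_info b (2*K) N d P \<le> del_max_info b 2 N d + N * (1-d) * log b K" by simp
qed

lemma nths_restrict: "nths xs A = nths xs (A \<inter> {0..<length xs})"
proof (induction xs arbitrary: A)
  case Nil then show ?case by simp
next
  case (Cons x xs)
  have "{j. Suc j \<in> A \<inter> {0..<length (x # xs)}} = {j. Suc j \<in> A} \<inter> {0..<length xs}" by auto
  then show ?case by (simp add: nths_Cons Cons.IH[of "{j. Suc j \<in> A}"])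
qed

lemma del_trans_append:
  "del_trans d (x1 @ x2) y = (\<Sum>i\<in>{0..length y}. del_trans d x1 (take i y) * del_trans d x2 (drop i y))"
proof -
  define a where "a = length x1"
  define c where "c = length x2"
  define A where "A = {S. S \<subseteq> {0..<a+c} \<and> nths (x1@x2) S = y}"
  define B where "B = {(S1,S2). S1 \<subseteq> {0..<a} \<and> S2 \<subseteq> {0..<c} \<and> nths x1 S1 @ nths x2 S2 = y}"
  define spl where "spl S = (S \<inter> {0..<a}, {j. j + a \<in> S})" for S :: "nat set"
  define jn where "jn p = fst p \<union> (\<lambda>j. j + a) ` snd p" for p :: "nat set \<times> nat set"
  have nap: "nths (x1@x2) S = nths x1 (fst (spl S)) @ nths x2 (snd (spl S))" for S
    unfolding nths_append spl_def a_def by (simp add: nths_restrict[of x1 S])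
  have cardj: "card (jn (S1,S2)) = card S1 + card S2" if "S1 \<subseteq> {0..<a}" "S2 \<subseteq> {0..<c}" for S1 S2
  proof -
    have f: "finite S1" "finite S2" using that finite_subset by auto
    have "card (jn (S1,S2)) = card S1 + card ((\<lambda>j. j + a) ` S2)"
      unfolding jn_def fst_conv snd_conv using that f by (intro card_Un_disjoint) auto
    also have "card ((\<lambda>j. j + a) ` S2) = card S2" by (rule card_image) (auto simp: inj_on_def)
    finally show ?thesis .
  qed
  have cle: "card S \<le> n" if "S \<subseteq> {0..<n}" for S n
    using card_mono[OF _ that] by simp
  have wtj: "wt d (a+c) (jn (S1,S2)) = wt d a S1 * wt d c S2" if "S1 \<subseteq> {0..<a}" "S2 \<subseteq> {0..<c}" for S1 S2
  proof -
    have "a + c - (card S1 + card S2) = (a - card S1) + (c - card S2)"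
      using cle[OF that(1)] cle[OF that(2)] by simp
    then show ?thesis unfolding wt_def cardj[OF that] by (simp add: power_add)
  qed
  have step1: "(\<Sum>S\<in>A. wt d (a+c) S) = (\<Sum>p\<in>B. wt d a (fst p) * wt d c (snd p))"
  proof (rule sum.reindex_bij_witness[where i=jn and j=spl])
    fix S assume S: "S \<in> A"
    then have Ss: "S \<subseteq> {0..<a+c}" by (simp add: A_def)
    have jS: "jn (spl S) = S"
    proof (rule set_eqI)
      fix s
      show "s \<in> jn (spl S) \<longleftrightarrow> s \<in> S"
      proof
        assume "s \<in> jn (spl S)" then show "s \<in> S" by (auto simp: jn_def spl_def)
      next
        assume s: "s \<in> S"
        show "s \<in> jn (spl S)"
        proof (cases "s < a")
          case True then show ?thesis using s by (simp add: jn_def spl_def)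
        next
          case False
          then have "s = (s - a) + a" "s - a \<in> {j. j + a \<in> S}" using s by auto
          then show ?thesis unfolding jn_def spl_def snd_conv by (metis UnI2 image_eqI)
        qed
      qed
    qed
    show "jn (spl S) = S" by (rule jS)
    have n1: "nths x1 (fst (spl S)) @ nths x2 (snd (spl S)) = y" using S nap[of S] by (simp add: A_def)
    have n2: "fst (spl S) \<subseteq> {0..<a}" "snd (spl S) \<subseteq> {0..<c}" using Ss by (auto simp: spl_def)
    show "spl S \<in> B" unfolding B_def mem_Collect_eq case_prod_beta using n1 n2 by blast
    have "wt d (a+c) S = wt d (a+c) (jn (fst (spl S), snd (spl S)))" by (metis jS prod.collapse)
    also have "\<dots> = wt d a (fst (spl S)) * wt d c (snd (spl S))"
      by (rule wtj) (use Ss in \<open>auto simp: spl_def\<close>)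
    finally show "wt d a (fst (spl S)) * wt d c (snd (spl S)) = wt d (a+c) S" by simp
  next
    fix p assume p: "p \<in> B"
    obtain S1 S2 where p12: "p = (S1,S2)" by (cases p)
    have s: "S1 \<subseteq> {0..<a}" "S2 \<subseteq> {0..<c}" using p by (auto simp: B_def p12)
    have e1: "(S1 \<union> (\<lambda>j. j + a) ` S2) \<inter> {0..<a} = S1" using s by auto
    have e2: "{j. j + a \<in> S1 \<union> (\<lambda>j. j + a) ` S2} = S2" using s by auto
    show "spl (jn p) = p" unfolding p12 spl_def jn_def fst_conv snd_conv e1 e2 by simp
    have js: "jn p \<subseteq> {0..<a+c}" unfolding p12 jn_def using s by auto
    have "nths (x1@x2) (jn p) = nths x1 S1 @ nths x2 S2"
      unfolding nap using \<open>spl (jn p) = p\<close> p12 by simp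
    then show "jn p \<in> A" using js p by (auto simp: A_def B_def p12)
  qed
  define A1 where "A1 i = {S1. S1 \<subseteq> {0..<a} \<and> nths x1 S1 = take i y}" for i
  define A2 where "A2 i = {S2. S2 \<subseteq> {0..<c} \<and> nths x2 S2 = drop i y}" for i
  have finB: "finite B"
    by (rule finite_subset[of _ "Pow {0..<a} \<times> Pow {0..<c}"]) (auto simp: B_def)
  have step2: "(\<Sum>p\<in>B. wt d a (fst p) * wt d c (snd p)) =
      (\<Sum>i\<in>{0..length y}. \<Sum>p\<in>{p\<in>B. length (nths x1 (fst p)) = i}. wt d a (fst p) * wt d c (snd p))"
    by (rule sum.group[symmetric, OF finB]) (auto simp: B_def)
  have Bi: "{p\<in>B. length (nths x1 (fst p)) = i} = A1 i \<times> A2 i" if i: "i \<in> {0..length y}" for i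
  proof (rule set_eqI)
    fix p :: "nat set \<times> nat set"
    obtain S1 S2 where p: "p = (S1,S2)" by (cases p)
    have iff: "(u @ v = y \<and> length u = i) \<longleftrightarrow> (u = take i y \<and> v = drop i y)" for u v :: "nat list"
    proof
      assume h: "u @ v = y \<and> length u = i"
      then show "u = take i y \<and> v = drop i y" using append_eq_conv_conj[of u v y] by metis
    next
      assume h: "u = take i y \<and> v = drop i y"
      then show "u @ v = y \<and> length u = i" using i by simp
    qed
    show "p \<in> {p\<in>B. length (nths x1 (fst p)) = i} \<longleftrightarrow> p \<in> A1 i \<times> A2 i"
      unfolding p B_def A1_def A2_def mem_Collect_eq mem_Sigma_iff fst_conv snd_conv prod.case
      using iff[of "nths x1 S1" "nths x2 S2"] by blast
  qed
  have step3: "(\<Sum>p\<in>A1 i \<times> A2 i. wt d a (fst p) * wt d c (snd p)) =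
      del_trans d x1 (take i y) * del_trans d x2 (drop i y)" for i
  proof -
    have "(\<Sum>p\<in>A1 i \<times> A2 i. wt d a (fst p) * wt d c (snd p)) = (\<Sum>S1\<in>A1 i. \<Sum>S2\<in>A2 i. wt d a S1 * wt d c S2)"
      by (subst sum.cartesian_product) (simp add: case_prod_beta)
    also have "\<dots> = (\<Sum>S1\<in>A1 i. wt d a S1) * (\<Sum>S2\<in>A2 i. wt d c S2)"
      by (rule sum_product[symmetric])
    also have "\<dots> = del_trans d x1 (take i y) * del_trans d x2 (drop i y)"
      unfolding del_trans_alt A1_def A2_def a_def c_def by (rule refl)
    finally show ?thesis .
  qed
  have "del_trans d (x1 @ x2) y = (\<Sum>S\<in>A. wt d (a+c) S)"
    by (simp add: del_trans_alt A_def a_def c_def)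
  also have "\<dots> = (\<Sum>i\<in>{0..length y}. del_trans d x1 (take i y) * del_trans d x2 (drop i y))"
    unfolding step1 step2 by (intro sum.cong refl) (simp add: Bi step3)
  finally show ?thesis .
qed



definition Tset :: "nat \<Rightarrow> nat \<Rightarrow> nat list \<Rightarrow> nat set" where
  "Tset a c y = {i\<in>{0..a}. i \<le> length y \<and> length y - i \<le> c}"

lemma finite_Tset: "finite (Tset a c y)" by (simp add: Tset_def)
lemma card_Tset: "card (Tset a c y) \<le> a + 1"
proof -
  have "card (Tset a c y) \<le> card {0..a}" by (rule card_mono) (auto simp: Tset_def)
  then show ?thesis by simp
qed

lemma split_reindex:
  "(\<Sum>y\<in>del_outputs q (a+c). \<Sum>i\<in>Tset a c y. F (take i y) (drop i y)) =
   (\<Sum>y1\<in>del_outputs q a. \<Sum>y2\<in>del_outputs q c. F y1 y2)"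
proof -
  have "(\<Sum>y\<in>del_outputs q (a+c). \<Sum>i\<in>Tset a c y. F (take i y) (drop i y)) =
      (\<Sum>p\<in>Sigma (del_outputs q (a+c)) (Tset a c). F (take (snd p) (fst p)) (drop (snd p) (fst p)))"
    by (subst sum.Sigma) (auto simp: finite_outputs finite_Tset case_prod_beta)
  also have "\<dots> = (\<Sum>p\<in>del_outputs q a \<times> del_outputs q c. F (fst p) (snd p))"
  proof (rule sum.reindex_bij_witness[where i="\<lambda>p. (fst p @ snd p, length (fst p))"
        and j="\<lambda>p. (take (snd p) (fst p), drop (snd p) (fst p))"])
    fix p assume p: "p \<in> Sigma (del_outputs q (a+c)) (Tset a c)"
    obtain y i where pe: "p = (y,i)" by (cases p)
    have y: "length y \<le> a + c" "set y \<subseteq> {1..q}" and i: "i \<le> a" "i \<le> length y" "length y - i \<le> c"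
      using p by (auto simp: pe del_outputs_def Tset_def)
    show "(fst (take (snd p) (fst p), drop (snd p) (fst p)) @ snd (take (snd p) (fst p), drop (snd p) (fst p)),
          length (fst (take (snd p) (fst p), drop (snd p) (fst p)))) = p"
      using i by (simp add: pe)
    have "set (take i y) \<subseteq> {1..q}" "set (drop i y) \<subseteq> {1..q}"
      using y(2) set_take_subset[of i y] set_drop_subset[of i y] by auto
    then show "(take (snd p) (fst p), drop (snd p) (fst p)) \<in> del_outputs q a \<times> del_outputs q c"
      using i by (simp add: pe del_outputs_def)
    show "F (fst (take (snd p) (fst p), drop (snd p) (fst p))) (snd (take (snd p) (fst p), drop (snd p) (fst p))) =
        F (take (snd p) (fst p)) (drop (snd p) (fst p))" by simp
  next
    fix p assume p: "p \<in> del_outputs q a \<times> del_outputs q c"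
    obtain y1 y2 where pe: "p = (y1,y2)" by (cases p)
    have h: "length y1 \<le> a" "length y2 \<le> c" "set y1 \<subseteq> {1..q}" "set y2 \<subseteq> {1..q}"
      using p by (auto simp: pe del_outputs_def)
    show "(take (snd (fst p @ snd p, length (fst p))) (fst (fst p @ snd p, length (fst p))),
          drop (snd (fst p @ snd p, length (fst p))) (fst (fst p @ snd p, length (fst p)))) = p"
      by (simp add: pe)
    show "(fst p @ snd p, length (fst p)) \<in> Sigma (del_outputs q (a+c)) (Tset a c)"
      using h by (auto simp: pe del_outputs_def Tset_def)
  qed
  also have "\<dots> = (\<Sum>y1\<in>del_outputs q a. \<Sum>y2\<in>del_outputs q c. F y1 y2)"
    by (subst sum.cartesian_product) (simp add: case_prod_beta)
  finally show ?thesis .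
qed

lemma input_reindex:
  "(\<Sum>x\<in>del_inputs q (a+c). G x) = (\<Sum>x1\<in>del_inputs q a. \<Sum>x2\<in>del_inputs q c. G (x1@x2))"
proof -
  have "(\<Sum>x\<in>del_inputs q (a+c). G x) = (\<Sum>p\<in>del_inputs q a \<times> del_inputs q c. G (fst p @ snd p))"
  proof (rule sum.reindex_bij_witness[where j="\<lambda>x. (take a x, drop a x)" and i="\<lambda>p. fst p @ snd p"])
    fix x assume x: "x \<in> del_inputs q (a+c)"
    show "fst (take a x, drop a x) @ snd (take a x, drop a x) = x" by simp
    have "set (take a x) \<subseteq> {1..q}" "set (drop a x) \<subseteq> {1..q}"
      using x set_take_subset[of a x] set_drop_subset[of a x] unfolding del_inputs_def by auto
    then show "(take a x, drop a x) \<in> del_inputs q a \<times> del_inputs q c"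
      using x by (simp add: del_inputs_def)
    show "G (fst (take a x, drop a x) @ snd (take a x, drop a x)) = G x" by simp
  next
    fix p assume p: "p \<in> del_inputs q a \<times> del_inputs q c"
    then show "(take a (fst p @ snd p), drop a (fst p @ snd p)) = p"
      by (cases p) (simp add: del_inputs_def)
    show "fst p @ snd p \<in> del_inputs q (a+c)" using p by (cases p) (auto simp: del_inputs_def)
  qed
  also have "\<dots> = (\<Sum>x1\<in>del_inputs q a. \<Sum>x2\<in>del_inputs q c. G (x1@x2))"
    by (subst sum.cartesian_product) (simp add: case_prod_beta)
  finally show ?thesis .
qed

lemma trans_split:
  assumes x1: "x1 \<in> del_inputs q a" and x2: "x2 \<in> del_inputs q c"
  shows "del_trans d (x1 @ x2) y = (\<Sum>i\<in>Tset a c y. del_trans d x1 (take i y) * del_trans d x2 (drop i y))"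
  unfolding del_trans_append
proof (rule sum.mono_neutral_right)
  show "finite {0..length y}" by simp
  show "Tset a c y \<subseteq> {0..length y}" by (auto simp: Tset_def)
  show "\<forall>i\<in>{0..length y} - Tset a c y. del_trans d x1 (take i y) * del_trans d x2 (drop i y) = 0"
  proof
    fix i assume i: "i \<in> {0..length y} - Tset a c y"
    then have "i > a \<or> length y - i > c" by (auto simp: Tset_def)
    then show "del_trans d x1 (take i y) * del_trans d x2 (drop i y) = 0"
    proof
      assume "i > a"
      then have "take i y \<notin> del_outputs q a" using i by (auto simp: del_outputs_def)
      then show ?thesis using del_trans_out[OF x1] by simp
    next
      assume "length y - i > c"
      then have "drop i y \<notin> del_outputs q c" by (auto simp: del_outputs_def)
      then show ?thesis using del_trans_out[OF x2] by simp
    qed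
  qed
qed



lemma swap4:
  "(\<Sum>a\<in>A. \<Sum>b\<in>B. \<Sum>y\<in>Y. \<Sum>i\<in>T y. f a b y i) = (\<Sum>y\<in>Y. \<Sum>i\<in>T y. \<Sum>a\<in>A. \<Sum>b\<in>B. f a b y i)"
proof -
  have "(\<Sum>a\<in>A. \<Sum>b\<in>B. \<Sum>y\<in>Y. \<Sum>i\<in>T y. f a b y i) = (\<Sum>a\<in>A. \<Sum>y\<in>Y. \<Sum>b\<in>B. \<Sum>i\<in>T y. f a b y i)"
    by (rule sum.cong[OF refl], rule sum.swap)
  also have "\<dots> = (\<Sum>a\<in>A. \<Sum>y\<in>Y. \<Sum>i\<in>T y. \<Sum>b\<in>B. f a b y i)"
    by (rule sum.cong[OF refl], rule sum.cong[OF refl], rule sum.swap)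
  also have "\<dots> = (\<Sum>y\<in>Y. \<Sum>a\<in>A. \<Sum>i\<in>T y. \<Sum>b\<in>B. f a b y i)"
    by (rule sum.swap)
  also have "\<dots> = (\<Sum>y\<in>Y. \<Sum>i\<in>T y. \<Sum>a\<in>A. \<Sum>b\<in>B. f a b y i)"
    by (rule sum.cong[OF refl], rule sum.swap)
  finally show ?thesis .
qed

lemma sum4_prod:
  "(\<Sum>a\<in>A. \<Sum>b\<in>B. \<Sum>c\<in>C. \<Sum>e\<in>E. (f a c :: real) * g b e) = (\<Sum>a\<in>A. \<Sum>c\<in>C. f a c) * (\<Sum>b\<in>B. \<Sum>e\<in>E. g b e)"
proof -
  have "(\<Sum>a\<in>A. \<Sum>b\<in>B. \<Sum>c\<in>C. \<Sum>e\<in>E. f a c * g b e) = (\<Sum>a\<in>A. \<Sum>c\<in>C. \<Sum>b\<in>B. \<Sum>e\<in>E. f a c * g b e)"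
    by (rule sum.cong[OF refl], rule sum.swap)
  also have "\<dots> = (\<Sum>a\<in>A. \<Sum>c\<in>C. f a c * (\<Sum>b\<in>B. \<Sum>e\<in>E. g b e))"
    by (simp add: sum_distrib_left)
  also have "\<dots> = (\<Sum>a\<in>A. \<Sum>c\<in>C. f a c) * (\<Sum>b\<in>B. \<Sum>e\<in>E. g b e)"
    by (simp add: sum_distrib_right)
  finally show ?thesis .
qed

definition Pcat :: "nat \<Rightarrow> nat \<Rightarrow> nat \<Rightarrow> (nat list \<Rightarrow> real) \<Rightarrow> (nat list \<Rightarrow> real) \<Rightarrow> nat list \<Rightarrow> real" where
  "Pcat q a c P1 P2 x = (if x \<in> del_inputs q (a+c) then P1 (take a x) * P2 (drop a x) else 0)"

lemma Pcat_app: "x1 \<in> del_inputs q a \<Longrightarrow> x2 \<in> del_inputs q c \<Longrightarrow> Pcat q a c P1 P2 (x1 @ x2) = P1 x1 * P2 x2"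
  unfolding Pcat_def by (auto simp: del_inputs_def)

lemma Pcat_dist:
  assumes P1: "P1 \<in> del_input_dists q a" and P2: "P2 \<in> del_input_dists q c"
  shows "Pcat q a c P1 P2 \<in> del_input_dists q (a+c)"
proof -
  have "(\<Sum>x\<in>del_inputs q (a+c). Pcat q a c P1 P2 x) = (\<Sum>x1\<in>del_inputs q a. \<Sum>x2\<in>del_inputs q c. P1 x1 * P2 x2)"
    unfolding input_reindex by (intro sum.cong refl) (simp add: Pcat_app)
  also have "\<dots> = 1" by (simp add: sum_product[symmetric] dists_sum[OF P1] dists_sum[OF P2])
  finally show ?thesis unfolding del_input_dists_def
    using dists_nonneg[OF P1] dists_nonneg[OF P2] by (auto simp: Pcat_def)
qed

theorem mi_superadd:
  assumes P1: "P1 \<in> del_input_dists q a" and P2: "P2 \<in> del_input_dists q c"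
    and d: "0 \<le> d" "d \<le> 1" and b: "b > 1"
  shows "del_mutual_info b q a d P1 + del_mutual_info b q c d P2 - log b (a+1)
      \<le> del_mutual_info b q (a+c) d (Pcat q a c P1 P2)"
proof -
  define X1 where "X1 = del_inputs q a"
  define X2 where "X2 = del_inputs q c"
  define Y where "Y = del_outputs q (a+c)"
  define Y1 where "Y1 = del_outputs q a"
  define Y2 where "Y2 = del_outputs q c"
  define W where "W = del_trans d"
  define Pc where "Pc = Pcat q a c P1 P2"
  define Q where "Q = del_output_prob q (a+c) d Pc"
  define Q1 where "Q1 = del_output_prob q a d P1"
  define Q2 where "Q2 = del_output_prob q c d P2"
  define T where "T = Tset a c"
  have Pc: "Pc \<in> del_input_dists q (a+c)" unfolding Pc_def by (rule Pcat_dist[OF P1 P2])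
  have Wnn: "0 \<le> W x y" for x y by (simp add: W_def del_trans_nonneg d)
  have P1nn: "0 \<le> P1 x" for x by (rule dists_nonneg[OF P1])
  have P2nn: "0 \<le> P2 x" for x by (rule dists_nonneg[OF P2])
  have Q1nn: "0 \<le> Q1 y" for y unfolding Q1_def by (rule outprob_nonneg[OF P1 d])
  have Q2nn: "0 \<le> Q2 y" for y unfolding Q2_def by (rule outprob_nonneg[OF P2 d])
  have Qnn: "0 \<le> Q y" for y unfolding Q_def by (rule outprob_nonneg[OF Pc d])
  have Wsplit: "W (x1 @ x2) y = (\<Sum>i\<in>T y. W x1 (take i y) * W x2 (drop i y))"
    if "x1 \<in> X1" "x2 \<in> X2" for x1 x2 y
    using trans_split[of x1 q a x2 c d y] that by (simp add: W_def T_def X1_def X2_def)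
  have finT: "finite (T y)" for y by (simp add: T_def finite_Tset)
  have Papp: "Pc (x1@x2) = P1 x1 * P2 x2" if "x1 \<in> X1" "x2 \<in> X2" for x1 x2
    using Pcat_app[of x1 q a x2 c P1 P2] that by (simp add: Pc_def X1_def X2_def)
  have QY: "Q y = (\<Sum>i\<in>T y. Q1 (take i y) * Q2 (drop i y))" for y
  proof -
    have "Q y = (\<Sum>x1\<in>X1. \<Sum>x2\<in>X2. Pc (x1@x2) * W (x1@x2) y)"
      unfolding Q_def del_output_prob_def input_reindex X1_def X2_def W_def by simp
    also have "\<dots> = (\<Sum>x1\<in>X1. \<Sum>x2\<in>X2. \<Sum>i\<in>T y. (P1 x1 * W x1 (take i y)) * (P2 x2 * W x2 (drop i y)))"
      by (intro sum.cong refl) (simp add: Papp Wsplit sum_distrib_left mult_ac)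
    also have "\<dots> = (\<Sum>i\<in>T y. \<Sum>x1\<in>X1. \<Sum>x2\<in>X2. (P1 x1 * W x1 (take i y)) * (P2 x2 * W x2 (drop i y)))"
      using swap4[where f="\<lambda>x1 x2 y i. (P1 x1 * W x1 (take i y)) * (P2 x2 * W x2 (drop i y))" and B=X2 and Y="{y}" and T=T and A=X1]
      by simp
    also have "\<dots> = (\<Sum>i\<in>T y. Q1 (take i y) * Q2 (drop i y))"
      by (intro sum.cong refl)
        (simp add: sum_product Q1_def Q2_def del_output_prob_def X1_def X2_def W_def)
    finally show ?thesis .
  qed
  define V where "V x1 x2 y i = P1 x1 * P2 x2 * W x1 (take i y) * W x2 (drop i y)" for x1 x2 y i
  have Vnn: "0 \<le> V x1 x2 y i" for x1 x2 y i by (simp add: V_def P1nn P2nn Wnn)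
  have I0: "del_mutual_info b q (a+c) d Pc = (\<Sum>x1\<in>X1. \<Sum>x2\<in>X2. \<Sum>y\<in>Y. \<Sum>i\<in>T y.
        V x1 x2 y i * log b (W (x1@x2) y / Q y))"
  proof -
    have "del_mutual_info b q (a+c) d Pc = (\<Sum>x1\<in>X1. \<Sum>x2\<in>X2. \<Sum>y\<in>Y.
        Pc (x1@x2) * W (x1@x2) y * log b (W (x1@x2) y / Q y))"
      unfolding mi_alt input_reindex X1_def X2_def Y_def W_def Q_def by simp
    also have "\<dots> = (\<Sum>x1\<in>X1. \<Sum>x2\<in>X2. \<Sum>y\<in>Y. \<Sum>i\<in>T y. V x1 x2 y i * log b (W (x1@x2) y / Q y))"
      by (intro sum.cong refl) (simp add: Papp Wsplit V_def sum_distrib_left sum_distrib_right mult_ac)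
    finally show ?thesis .
  qed
  define LJ where "LJ x1 x2 y i = log b (W x1 (take i y) * W x2 (drop i y) / (Q1 (take i y) * Q2 (drop i y)))" for x1 x2 y i
  define L1 where "L1 x1 x2 y i = log b (W x1 (take i y) * W x2 (drop i y) / W (x1@x2) y)" for x1 x2 y i
  define L2 where "L2 y i = log b (Q y / (Q1 (take i y) * Q2 (drop i y)))" for y i
  have pt: "V x1 x2 y i * log b (W (x1@x2) y / Q y) =
      V x1 x2 y i * LJ x1 x2 y i - V x1 x2 y i * L1 x1 x2 y i - V x1 x2 y i * L2 y i"
    if x1: "x1 \<in> X1" and x2: "x2 \<in> X2" and y: "y \<in> Y" and i: "i \<in> T y" for x1 x2 y i
  proof (cases "V x1 x2 y i = 0")
    case True then show ?thesis by (simp only: True)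
  next
    case False
    define t where "t = take i y"
    define r where "r = drop i y"
    have pos: "P1 x1 > 0" "P2 x2 > 0" "W x1 t > 0" "W x2 r > 0"
      using False P1nn[of x1] P2nn[of x2] Wnn[of x1 t] Wnn[of x2 r]
      by (auto simp: V_def t_def r_def less_le)
    have q1: "P1 x1 * W x1 t \<le> Q1 t" using outprob_ge[OF P1 d, of x1 t] x1 by (simp add: Q1_def W_def X1_def)
    have q2: "P2 x2 * W x2 r \<le> Q2 r" using outprob_ge[OF P2 d, of x2 r] x2 by (simp add: Q2_def W_def X2_def)
    have Q1p: "Q1 t > 0" using q1 pos by (smt (verit) mult_pos_pos)
    have Q2p: "Q2 r > 0" using q2 pos by (smt (verit) mult_pos_pos)
    have w12: "W x1 t * W x2 r \<le> W (x1@x2) y"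
      unfolding Wsplit[OF x1 x2] t_def r_def
      by (rule member_le_sum[OF i]) (auto simp: Wnn finT)
    have qq: "Q1 t * Q2 r \<le> Q y"
      unfolding QY t_def r_def
      by (rule member_le_sum[OF i]) (auto simp: Q1nn Q2nn finT)
    have W12p: "W (x1@x2) y > 0" using w12 pos by (smt (verit) mult_pos_pos)
    have Qp: "Q y > 0" using qq Q1p Q2p by (smt (verit) mult_pos_pos)
    have "log b (W (x1@x2) y / Q y) = LJ x1 x2 y i - L1 x1 x2 y i - L2 y i"
      unfolding LJ_def L1_def L2_def t_def[symmetric] r_def[symmetric]
      using pos Q1p Q2p W12p Qp b by (simp add: log_divide log_mult)
    then show ?thesis by (simp add: right_diff_distrib)
  qed
  have Isplit: "del_mutual_info b q (a+c) d Pc =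
     (\<Sum>x1\<in>X1. \<Sum>x2\<in>X2. \<Sum>y\<in>Y. \<Sum>i\<in>T y. V x1 x2 y i * LJ x1 x2 y i)
     - (\<Sum>x1\<in>X1. \<Sum>x2\<in>X2. \<Sum>y\<in>Y. \<Sum>i\<in>T y. V x1 x2 y i * L1 x1 x2 y i)
     - (\<Sum>x1\<in>X1. \<Sum>x2\<in>X2. \<Sum>y\<in>Y. \<Sum>i\<in>T y. V x1 x2 y i * L2 y i)"
    unfolding I0 by (simp add: pt sum_subtractf cong: sum.cong)
  have J: "(\<Sum>x1\<in>X1. \<Sum>x2\<in>X2. \<Sum>y\<in>Y. \<Sum>i\<in>T y. V x1 x2 y i * LJ x1 x2 y i)
      = del_mutual_info b q a d P1 + del_mutual_info b q c d P2"
  proof -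
    define F where "F x1 x2 y1 y2 = P1 x1 * P2 x2 * W x1 y1 * W x2 y2 * log b (W x1 y1 * W x2 y2 / (Q1 y1 * Q2 y2))" for x1 x2 y1 y2
    have "(\<Sum>x1\<in>X1. \<Sum>x2\<in>X2. \<Sum>y\<in>Y. \<Sum>i\<in>T y. V x1 x2 y i * LJ x1 x2 y i)
        = (\<Sum>x1\<in>X1. \<Sum>x2\<in>X2. \<Sum>y1\<in>Y1. \<Sum>y2\<in>Y2. F x1 x2 y1 y2)"
    proof (rule sum.cong[OF refl], rule sum.cong[OF refl])
      fix x1 x2 assume "x1 \<in> X1" "x2 \<in> X2"
      have e: "V x1 x2 y i * LJ x1 x2 y i = F x1 x2 (take i y) (drop i y)" for y i
        by (simp add: F_def V_def LJ_def)
      show "(\<Sum>y\<in>Y. \<Sum>i\<in>T y. V x1 x2 y i * LJ x1 x2 y i) = (\<Sum>y1\<in>Y1. \<Sum>y2\<in>Y2. F x1 x2 y1 y2)"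
        unfolding e Y_def Y1_def Y2_def T_def by (rule split_reindex)
    qed
    also have "\<dots> = (\<Sum>x1\<in>X1. \<Sum>x2\<in>X2. \<Sum>y1\<in>Y1. \<Sum>y2\<in>Y2.
          (P1 x1 * W x1 y1 * log b (W x1 y1 / Q1 y1)) * (P2 x2 * W x2 y2)
          + (P1 x1 * W x1 y1) * (P2 x2 * W x2 y2 * log b (W x2 y2 / Q2 y2)))"
    proof (intro sum.cong refl)
      fix x1 x2 y1 y2 assume x1: "x1 \<in> X1" and x2: "x2 \<in> X2"
      show "F x1 x2 y1 y2 = (P1 x1 * W x1 y1 * log b (W x1 y1 / Q1 y1)) * (P2 x2 * W x2 y2)
          + (P1 x1 * W x1 y1) * (P2 x2 * W x2 y2 * log b (W x2 y2 / Q2 y2))"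
      proof (cases "P1 x1 * W x1 y1 * (P2 x2 * W x2 y2) = 0")
        case True
        then have "P1 x1 * W x1 y1 = 0 \<or> P2 x2 * W x2 y2 = 0" by simp
        then show ?thesis unfolding F_def by (auto simp: mult_ac)
      next
        case False
        have pos: "P1 x1 > 0" "P2 x2 > 0" "W x1 y1 > 0" "W x2 y2 > 0"
          using False P1nn[of x1] P2nn[of x2] Wnn[of x1 y1] Wnn[of x2 y2] by (auto simp: less_le)
        have q1: "P1 x1 * W x1 y1 \<le> Q1 y1" using outprob_ge[OF P1 d, of x1 y1] x1 by (simp add: Q1_def W_def X1_def)
        have q2: "P2 x2 * W x2 y2 \<le> Q2 y2" using outprob_ge[OF P2 d, of x2 y2] x2 by (simp add: Q2_def W_def X2_def)
        have Q1p: "Q1 y1 > 0" using q1 pos by (smt (verit) mult_pos_pos)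
        have Q2p: "Q2 y2 > 0" using q2 pos by (smt (verit) mult_pos_pos)
        have "log b (W x1 y1 * W x2 y2 / (Q1 y1 * Q2 y2)) = log b (W x1 y1 / Q1 y1) + log b (W x2 y2 / Q2 y2)"
          using pos Q1p Q2p b by (simp add: log_divide log_mult)
        then show ?thesis unfolding F_def by (simp add: algebra_simps)
      qed
    qed
    also have "\<dots> = (\<Sum>x1\<in>X1. \<Sum>y1\<in>Y1. P1 x1 * W x1 y1 * log b (W x1 y1 / Q1 y1)) * (\<Sum>x2\<in>X2. \<Sum>y2\<in>Y2. P2 x2 * W x2 y2)
        + (\<Sum>x1\<in>X1. \<Sum>y1\<in>Y1. P1 x1 * W x1 y1) * (\<Sum>x2\<in>X2. \<Sum>y2\<in>Y2. P2 x2 * W x2 y2 * log b (W x2 y2 / Q2 y2))"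
      by (simp add: sum.distrib sum4_prod)
    also have "(\<Sum>x2\<in>X2. \<Sum>y2\<in>Y2. P2 x2 * W x2 y2) = 1"
      by (simp add: sum_distrib_left[symmetric] X2_def Y2_def W_def del_trans_sums(1) dists_sum[OF P2] cong: sum.cong)
    also have "(\<Sum>x1\<in>X1. \<Sum>y1\<in>Y1. P1 x1 * W x1 y1) = 1"
      by (simp add: sum_distrib_left[symmetric] X1_def Y1_def W_def del_trans_sums(1) dists_sum[OF P1] cong: sum.cong)
    finally show ?thesis
      by (simp add: mi_alt X1_def X2_def Y1_def Y2_def W_def Q1_def Q2_def)
  qed
  have D1: "(\<Sum>x1\<in>X1. \<Sum>x2\<in>X2. \<Sum>y\<in>Y. \<Sum>i\<in>T y. V x1 x2 y i * L1 x1 x2 y i) \<le> 0"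
  proof (intro sum_nonpos)
    fix x1 x2 y i assume x1: "x1 \<in> X1" and x2: "x2 \<in> X2" and y: "y \<in> Y" and i: "i \<in> T y"
    show "V x1 x2 y i * L1 x1 x2 y i \<le> 0"
    proof (cases "V x1 x2 y i = 0")
      case True then show ?thesis by simp
    next
      case False
      define t where "t = take i y"
      define r where "r = drop i y"
      have pos: "W x1 t > 0" "W x2 r > 0"
        using False Wnn[of x1 t] Wnn[of x2 r] by (auto simp: V_def t_def r_def less_le)
      have w12: "W x1 t * W x2 r \<le> W (x1@x2) y"
        unfolding Wsplit[OF x1 x2] t_def r_def
        by (rule member_le_sum[OF i]) (auto simp: Wnn finT)
      have W12p: "W (x1@x2) y > 0" using w12 pos by (smt (verit) mult_pos_pos)
      have "L1 x1 x2 y i \<le> 0"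
        unfolding L1_def t_def[symmetric] r_def[symmetric]
        using pos w12 b W12p by (subst log_le_zero_cancel_iff) (auto simp: divide_le_eq_1)
      then show ?thesis using Vnn[of x1 x2 y i] by (simp add: mult_nonneg_nonpos)
    qed
  qed
  have D2: "(\<Sum>x1\<in>X1. \<Sum>x2\<in>X2. \<Sum>y\<in>Y. \<Sum>i\<in>T y. V x1 x2 y i * L2 y i) \<le> log b (a+1)"
  proof -
    have "(\<Sum>x1\<in>X1. \<Sum>x2\<in>X2. \<Sum>y\<in>Y. \<Sum>i\<in>T y. V x1 x2 y i * L2 y i)
        = (\<Sum>y\<in>Y. \<Sum>i\<in>T y. \<Sum>x1\<in>X1. \<Sum>x2\<in>X2. V x1 x2 y i * L2 y i)" by (rule swap4)
    also have "\<dots> = (\<Sum>y\<in>Y. \<Sum>i\<in>T y. (\<Sum>x1\<in>X1. \<Sum>x2\<in>X2. V x1 x2 y i) * L2 y i)"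
      by (simp add: sum_distrib_right)
    also have "\<dots> = (\<Sum>y\<in>Y. \<Sum>i\<in>T y. Q1 (take i y) * Q2 (drop i y) * L2 y i)"
    proof -
      have Qprod: "(\<Sum>x1\<in>X1. \<Sum>x2\<in>X2. V x1 x2 y i) = Q1 (take i y) * Q2 (drop i y)" for y i
        by (simp add: V_def Q1_def Q2_def del_output_prob_def X1_def X2_def W_def sum_product mult_ac)
      show ?thesis by (simp only: Qprod)
    qed
    also have "\<dots> = (\<Sum>y\<in>Y. \<Sum>i\<in>T y. Q1 (take i y) * Q2 (drop i y) * log b (Q y / (Q1 (take i y) * Q2 (drop i y))))"
      by (simp add: L2_def)
    also have "\<dots> \<le> (\<Sum>y\<in>Y. Q y * log b (a+1))"
    proof (rule sum_mono)
      fix y assume y: "y \<in> Y"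
      have "(\<Sum>i\<in>T y. Q1 (take i y) * Q2 (drop i y) * log b (Q y / (Q1 (take i y) * Q2 (drop i y))))
          \<le> Q y * log b (card (T y))"
        using entropy_bound[OF finT[of y], of "\<lambda>i. Q1 (take i y) * Q2 (drop i y)" b] Q1nn Q2nn b
        by (simp add: QY[symmetric])
      also have "\<dots> \<le> Q y * log b (a+1)"
      proof (rule mult_left_mono[OF _ Qnn])
        show "log b (card (T y)) \<le> log b (a+1)"
        proof (cases "card (T y) = 0")
          case True then show ?thesis using b by (simp add: log_def[of b 0])
        next
          case False
          have "card (T y) \<le> a + 1" using card_Tset[of a c y] by (simp add: T_def)
          then show ?thesis using False b by (subst log_le_cancel_iff) auto
        qed
      qed
      finally show "(\<Sum>i\<in>T y. Q1 (take i y) * Q2 (drop i y) * log b (Q y / (Q1 (take i y) * Q2 (drop i y))))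
          \<le> Q y * log b (a+1)" .
    qed
    also have "\<dots> = log b (a+1)"
      using outprob_sum[OF Pc, of d] by (simp add: sum_distrib_right[symmetric] Y_def Q_def)
    finally show ?thesis .
  qed
  show ?thesis using Isplit J D1 D2 by (simp add: Pc_def)
qed

lemma max_superadd:
  assumes d: "0 \<le> d" "d \<le> 1" and b: "b > 1" and q: "q \<ge> 1"
  shows "del_max_info b q a d + del_max_info b q c d - log b (a+1) \<le> del_max_info b q (a+c) d"
proof -
  let ?f = "\<lambda>n. del_max_info b q n d"
  have "?f c \<le> ?f (a+c) + log b (a+1) - ?f a"
  proof (rule max_le[OF q])
    fix P2 assume P2: "P2 \<in> del_input_dists q c"
    have "?f a \<le> ?f (a+c) + log b (a+1) - del_mutual_info b q c d P2"
    proof (rule max_le[OF q])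
      fix P1 assume P1: "P1 \<in> del_input_dists q a"
      have "del_mutual_info b q a d P1 + del_mutual_info b q c d P2 - log b (a+1)
          \<le> del_mutual_info b q (a+c) d (Pcat q a c P1 P2)" by (rule mi_superadd[OF P1 P2 d b])
      also have "\<dots> \<le> ?f (a+c)" by (rule mi_le_max[OF d b q Pcat_dist[OF P1 P2]])
      finally show "del_mutual_info b q a d P1 \<le> ?f (a+c) + log b (a+1) - del_mutual_info b q c d P2" by simp
    qed
    then show "del_mutual_info b q c d P2 \<le> ?f (a+c) + log b (a+1) - ?f a" by simp
  qed
  then show ?thesis by simp
qed



lemma loglim: "b > 1 \<Longrightarrow> (\<lambda>n. log b (real (n + 1)) / real n) \<longlonglongrightarrow> 0"
proof -
  assume b: "b > 1"
  have "(\<lambda>n. ln (real n + 1) / real n) \<longlonglongrightarrow> 0" by real_asymp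
  then have "(\<lambda>n. (ln (real n + 1) / real n) / ln b) \<longlonglongrightarrow> 0 / ln b"
    by (intro tendsto_divide) (use b in auto)
  then show ?thesis by (simp add: log_def field_simps)
qed

lemma fekete_log:
  fixes f g :: "nat \<Rightarrow> real" and C :: real
  assumes f0: "\<And>n. 0 \<le> f n" and fC: "\<And>n. f n \<le> n * C"
    and sup: "\<And>m n. f m + f n - g m \<le> f (m+n)"
    and g0: "\<And>n. 0 \<le> g n" and gmono: "\<And>m n. m \<le> n \<Longrightarrow> g m \<le> g n"
    and glim: "(\<lambda>n. g n / n) \<longlonglongrightarrow> 0"
  shows "\<exists>L. (\<lambda>n. f n / n) \<longlonglongrightarrow> L"
proof -
  define h where "h N = (f N - g N) / N" for N
  define L where "L = (SUP N\<in>{1..}. h N)"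
  have hC: "h N \<le> C" if "N \<ge> 1" for N
  proof -
    have "h N \<le> f N / N" unfolding h_def using that g0[of N] by (intro divide_right_mono) auto
    also have "\<dots> \<le> C" using fC[of N] that by (simp add: divide_le_eq mult.commute)
    finally show ?thesis .
  qed
  have bdd: "bdd_above (h ` {1..})" using hC by (intro bdd_aboveI2) auto
  have hL: "h N \<le> L" if "N \<ge> 1" for N unfolding L_def by (rule cSUP_upper[OF _ bdd]) (use that in auto)
  have upper: "f n / n \<le> L + g n / n" if "n \<ge> 1" for n
  proof -
    have "f n / n = h n + g n / n" using that by (simp add: h_def diff_divide_distrib)
    then show ?thesis using hL[OF that] by simp
  qed
  have mult: "f (k * N) \<ge> k * (f N - g N)" for k N
  proof (induction k)
    case 0 then show ?case using f0[of 0] by simp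
  next
    case (Suc k)
    have "f N + f (k*N) - g N \<le> f (N + k*N)" by (rule sup)
    then show ?case using Suc.IH by (simp add: algebra_simps)
  qed
  have lower: "f n / n \<ge> h N - (N * \<bar>h N\<bar> + g N) / n" if N: "N \<ge> 1" and n: "n \<ge> 1" for N n
  proof -
    define k where "k = n div N"
    define r where "r = n mod N"
    have nkr: "n = r + k * N" by (simp add: k_def r_def)
    have rN: "r \<le> N" using N by (simp add: r_def less_imp_le)
    have kN: "real (k * N) \<ge> real n - real N"
      using nkr rN by simp
    have "f n \<ge> f r + f (k*N) - g r" unfolding nkr using sup[of r "k*N"] by simp
    then have "f n \<ge> f (k*N) - g N" using f0[of r] gmono[OF rN] by simp
    moreover have "f (k*N) \<ge> real (k*N) * h N"
      using mult[of k N] N by (simp add: h_def)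
    moreover have "real (k*N) * h N \<ge> real n * h N - N * \<bar>h N\<bar>"
    proof (cases "h N \<ge> 0")
      case True
      have "real (k*N) * h N \<ge> (real n - real N) * h N" by (rule mult_right_mono[OF kN True])
      then show ?thesis using True by (simp add: algebra_simps)
    next
      case False
      have a1: "real (k*N) * h N \<ge> real n * h N"
        using False nkr by (intro mult_right_mono_neg) auto
      have a2: "real N * \<bar>h N\<bar> \<ge> 0" by simp
      from a1 a2 show ?thesis by linarith
    qed
    ultimately have "f n \<ge> real n * h N - (N * \<bar>h N\<bar> + g N)" by simp
    then have "f n / n \<ge> (real n * h N - (N * \<bar>h N\<bar> + g N)) / n"
      using n by (intro divide_right_mono) auto
    also have "(real n * h N - (N * \<bar>h N\<bar> + g N)) / n = h N - (N * \<bar>h N\<bar> + g N) / n"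
      using n by (simp add: field_simps)
    finally show ?thesis .
  qed
  have "(\<lambda>n. f n / n) \<longlonglongrightarrow> L"
  proof (rule LIMSEQ_I)
    fix e :: real assume e: "e > 0"
    have "L - e/2 < L" using e by simp
    then obtain N where N: "N \<in> {1..}" and hN: "L - e/2 < h N"
      unfolding L_def by (subst (asm) less_cSUP_iff[OF _ bdd]) auto
    define M where "M = N * \<bar>h N\<bar> + g N"
    have M0: "M \<ge> 0" using g0[of N] by (simp add: M_def)
    obtain n1 where n1: "\<And>n. n \<ge> n1 \<Longrightarrow> norm (g n / n - 0) < e"
      using LIMSEQ_D[OF glim e] by blast
    define n0 where "n0 = max (max n1 1) (nat \<lceil>2 * M / e\<rceil>)"
    show "\<exists>no. \<forall>n\<ge>no. norm (f n / real n - L) < e"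
    proof (intro exI allI impI)
      fix n assume n: "n \<ge> n0"
      then have n1': "n \<ge> n1" and nge1: "n \<ge> 1" by (auto simp: n0_def)
      have "real n \<ge> 2 * M / e" using n unfolding n0_def by linarith
      then have "2 * M \<le> real n * e" using e by (simp add: divide_le_eq)
      then have Mn: "M / n \<le> e / 2" using nge1 by (simp add: divide_le_eq mult.commute)
      have u: "f n / n < L + e" using upper[OF nge1] n1[OF n1'] g0[of n] by simp
      have lw: "f n / n \<ge> h N - M / n" using lower[OF _ nge1, of N] N unfolding M_def by simp
      have l: "f n / n > L - e" using lw hN Mn by linarith
      show "norm (f n / real n - L) < e" using u l by simp
    qed
  qed
  then show ?thesis by blast
qed

lemma capacity_lim:
  assumes d: "0 \<le> d" "d \<le> 1" and b: "b > 1" and q: "q \<ge> 1"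
  shows "(\<lambda>N. del_max_info b q N d / real N) \<longlonglongrightarrow> deletion_capacity b q d"
proof -
  have "\<exists>L. (\<lambda>N. del_max_info b q N d / real N) \<longlonglongrightarrow> L"
  proof (rule fekete_log[where g="\<lambda>m. log b (real (m+1))" and C="log b q"])
    show "0 \<le> del_max_info b q n d" for n by (rule max_nonneg[OF d b q])
    show "del_max_info b q n d \<le> n * log b q" for n by (rule max_upper[OF d b q])
    show "del_max_info b q m d + del_max_info b q n d - log b (real (m+1)) \<le> del_max_info b q (m+n) d" for m n
      by (rule max_superadd[OF d b q])
    show "0 \<le> log b (real (n+1))" for n using b by simp
    show "log b (real (m+1)) \<le> log b (real (n+1))" if "m \<le> n" for m n using b that by simp
    show "(\<lambda>n. log b (real (n+1)) / real n) \<longlonglongrightarrow> 0" by (rule loglim[OF b])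
  qed
  then obtain L where L: "(\<lambda>N. del_max_info b q N d / real N) \<longlonglongrightarrow> L" by blast
  then have "deletion_capacity b q d = L" unfolding deletion_capacity_def by (rule limI)
  then show ?thesis using L by simp
qed

theorem theorem1:
  fixes K :: nat and d b :: real
  assumes "K \<ge> 1" and "0 \<le> d" and "d \<le> 1" and "b > 1"
  shows "deletion_capacity b (2 * K) d \<le> deletion_capacity b 2 d + (1 - d) * log b (real K)"
proof (rule LIMSEQ_le)
  show "(\<lambda>N. del_max_info b (2*K) N d / real N) \<longlonglongrightarrow> deletion_capacity b (2 * K) d"
    by (rule capacity_lim) (use assms in auto)
  show "(\<lambda>N. del_max_info b 2 N d / real N + (1 - d) * log b (real K)) \<longlonglongrightarrow> deletion_capacity b 2 d + (1 - d) * log b (real K)"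
    by (intro tendsto_add tendsto_const capacity_lim) (use assms in auto)
  show "\<exists>N. \<forall>n\<ge>N. del_max_info b (2*K) n d / real n \<le> del_max_info b 2 n d / real n + (1 - d) * log b (real K)"
  proof (intro exI allI impI)
    fix n :: nat assume n: "n \<ge> 1"
    have "del_max_info b (2*K) n d \<le> del_max_info b 2 n d + n * (1-d) * log b K"
      by (rule max_map_bound) (use assms in auto)
    then have "del_max_info b (2*K) n d / n \<le> (del_max_info b 2 n d + n * (1-d) * log b K) / n"
      using n by (intro divide_right_mono) auto
    also have "\<dots> = del_max_info b 2 n d / real n + (1 - d) * log b (real K)"
      using n by (simp add: field_simps)
    finally show "del_max_info b (2*K) n d / real n \<le> del_max_info b 2 n d / real n + (1 - d) * log b (real K)" .
  qed
qed


end
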